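(* Let $q$ be a prime power, $r\ge 1$ an integer, and $\mathcal{S}$ a $q^r$-divisible spanning set of $q^{r+1}$ points in $\mathrm{PG}(v-1,q)$. Let $K$ be a subspace of codimension $2$ (i.e. a $(v-2)$-space) with $|\mathcal{S}\cap K|=kq^{r-1}$ for some integer $0<k<q$. Then every hyperplane $H$ containing $K$ satisfies $|\mathcal{S}\cap H|\le kq^r$.
   Context: $\mathrm{PG}(v-1,q)$ is the projective space of $\mathbb{F}_q^v$; a $k$-space is a $k$-dimensional subspace of $\mathbb{F}_q^v$ (points are $1$-spaces, hyperplanes $(v-1)$-spaces). A set $\mathcal{S}$ of points is spanning if its points span $\mathbb{F}_q^v$, and it is $q^r$-divisible if $|\mathcal{S}\cap H|\equiv|\mathcal{S}|\pmod{q^r}$ for every hyperplane $H$. *)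

theory Defs
  imports "HOL-Analysis.Analysis"
begin

text \<open>The ambient space is F_q^v, modelled as the type 'a^'n with 'a a finite field
  (q = CARD('a)) and v = CARD('n). A k-space is a k-dimensional F_q-subspace.\<close>

definition kspace :: "nat \<Rightarrow> ('a::field ^ 'n) set \<Rightarrow> bool" where
  "kspace k W \<longleftrightarrow> vec.subspace W \<and> vec.dim W = k"

definition is_point :: "('a::field ^ 'n) set \<Rightarrow> bool" where
  "is_point P \<longleftrightarrow> kspace 1 P"

definition is_hyperplane :: "('a::field ^ 'n) set \<Rightarrow> bool" where
  "is_hyperplane H \<longleftrightarrow> kspace (CARD('n) - 1) H"

definition pts_in :: "('a::field ^ 'n) set set \<Rightarrow> ('a ^ 'n) set \<Rightarrow> nat" where
  "pts_in S W = card {P \<in> S. P \<subseteq> W}"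

definition spanning :: "('a::field ^ 'n) set set \<Rightarrow> bool" where
  "spanning S \<longleftrightarrow> vec.span (\<Union>S) = UNIV"

definition divisible :: "nat \<Rightarrow> ('a::field ^ 'n) set set \<Rightarrow> bool" where
  "divisible m S \<longleftrightarrow> (\<forall>H. is_hyperplane H \<longrightarrow> pts_in S H mod m = card S mod m)"

end

theory Submission
  imports Defs
begin

lemma span_ins_mem:
  fixes K :: "('a::field ^ 'n) set"
  assumes "vec.subspace K" "x \<in> vec.span (insert u K)"
  shows "\<exists>t. x - t *s u \<in> K"
  proof -
  have "vec.span K = K" using assms(1) by simp
  have "x \<in> {x. \<exists>k. x - k *s u \<in> vec.span K}" using assms(2) vec.span_insert[of u K] by simp
  then obtain k where "x - k *s u \<in> vec.span K" by blast
  thus ?thesis using \<open>vec.span K = K\<close> by auto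
qed

lemma inter_pencil:
  fixes K H :: "('a::field ^ 'n) set"
  assumes K: "vec.subspace K" and H: "vec.subspace H" and KH: "K \<subseteq> H"
    and a: "a \<in> H" "a \<notin> K" and b: "b \<notin> H" and cd: "c \<noteq> d"
    and x1: "x - t *s (b + c *s a) \<in> K" and x2: "x - s *s (b + d *s a) \<in> K"
  shows "x \<in> K"
proof -
  have "(x - t *s (b + c *s a)) - (x - s *s (b + d *s a)) \<in> K"
    using vec.subspace_diff[OF K x1 x2] .
  hence e: "(s - t) *s b + (s*d - t*c) *s a \<in> K"
  proof -
    have "(x - t *s (b + c *s a)) - (x - s *s (b + d *s a)) = (s - t) *s b + (s*d - t*c) *s a"
      by (simp add: vec_eq_iff algebra_simps)
    thus ?thesis using \<open>(x - t *s (b + c *s a)) - (x - s *s (b + d *s a)) \<in> K\<close> by metis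
  qed
  have "(s - t) *s b + (s*d - t*c) *s a - (s*d - t*c) *s a \<in> H"
    using vec.subspace_diff[OF H _ vec.subspace_scale[OF H a(1)]] e KH by blast
  hence sb: "(s - t) *s b \<in> H" by simp
  have st: "s = t"
  proof (rule ccontr)
    assume "s \<noteq> t"
    hence "inverse (s - t) *s ((s - t) *s b) = b" by (simp only: vector_smult_assoc, simp)
    with vec.subspace_scale[OF H sb, of "inverse (s-t)"] b show False by simp
  qed
  have "(s - t) *s b + (s*d - t*c) *s a = (t*(d - c)) *s a" using st by (simp add: vec_eq_iff algebra_simps)
  hence ta: "(t*(d - c)) *s a \<in> K" using e by simp
  have t0: "t = 0"
  proof (rule ccontr)
    assume "t \<noteq> 0"
    hence "inverse (t*(d-c)) *s ((t*(d - c)) *s a) = a" proof -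
      have nz: "t*(d-c) \<noteq> 0" using cd \<open>t \<noteq> 0\<close> by simp
      show ?thesis by (simp only: vector_smult_assoc left_inverse[OF nz], simp)
    qed
    with vec.subspace_scale[OF K ta, of "inverse (t*(d-c))"] a show False by simp
  qed
  show ?thesis using x1 t0 by simp
qed

lemma inter_pencil_H:
  fixes K H :: "('a::field ^ 'n) set"
  assumes K: "vec.subspace K" and H: "vec.subspace H" and KH: "K \<subseteq> H"
    and a: "a \<in> H" and b: "b \<notin> H" and xH: "x \<in> H"
    and x1: "x - t *s (b + c *s a) \<in> K"
  shows "x \<in> K"
proof -
  have "x - (x - t *s (b + c *s a)) - t *s (c *s a) \<in> H"
    using x1 KH xH a H by (meson subsetD vec.subspace_diff vec.subspace_scale)
  moreover have "x - (x - t *s (b + c *s a)) - t *s (c *s a) = t *s b" by (simp add: vec_eq_iff algebra_simps)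
  ultimately have sb: "t *s b \<in> H" by simp
  have t0: "t = 0"
  proof (rule ccontr)
    assume "t \<noteq> 0"
    hence "inverse t *s (t *s b) = b" by (simp only: vector_smult_assoc, simp)
    with vec.subspace_scale[OF H sb, of "inverse t"] b show False by simp
  qed
  show ?thesis using x1 t0 by simp
qed

theorem lemma1:
  fixes S :: "('a::{finite,field} ^ 'n) set set" and K :: "('a ^ 'n) set"
    and r k :: nat
  assumes "r \<ge> 1"
    and "\<forall>P\<in>S. is_point P"
    and "card S = CARD('a) ^ (r + 1)"
    and "divisible (CARD('a) ^ r) S"
    and "spanning S"
    and "CARD('n) \<ge> 2"
    and "kspace (CARD('n) - 2) K"
    and "pts_in S K = k * CARD('a) ^ (r - 1)"
    and "0 < k" and "k < CARD('a)"
  shows "\<forall>H. is_hyperplane H \<and> K \<subseteq> H \<longrightarrow> pts_in S H \<le> k * CARD('a) ^ r"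
proof (intro allI impI, elim conjE)
  fix H :: "('a ^ 'n) set"
  assume hH: "is_hyperplane H" and KH: "K \<subseteq> H"
  define q where "q = CARD('a)"
  define v where "v = CARD('n)"
  have q1: "q \<ge> 1" unfolding q_def by (simp add: Suc_leI)
  have Hs: "vec.subspace H" and Hd: "vec.dim H = v - 1"
    using hH unfolding is_hyperplane_def kspace_def v_def by auto
  have Ks: "vec.subspace K" and Kd: "vec.dim K = v - 2"
    using assms(7) unfolding kspace_def v_def by auto
  have v2: "v \<ge> 2" using assms(6) v_def by simp
  have finS: "finite S" by simp
  obtain a where a: "a \<in> H" "a \<notin> K"
  proof -
    have "\<not> H \<subseteq> K"
    proof
      assume "H \<subseteq> K"
      hence "vec.dim H \<le> vec.dim K" by (rule vec.dim_subset)
      thus False using Hd Kd v2 by simp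
    qed
    thus ?thesis using that by blast
  qed
  obtain b where b: "b \<notin> H"
  proof -
    have "H \<noteq> UNIV"
    proof
      assume "H = UNIV"
      hence "vec.dim H = v" using vec.dim_UNIV card_cart_basis v_def by metis
      thus False using Hd v2 by simp
    qed
    thus ?thesis using that by blast
  qed
  define Hc where "Hc c = vec.span (insert (b + c *s a) K)" for c :: 'a
  define A where "A c = {P\<in>S. P \<subseteq> Hc c \<and> \<not> P \<subseteq> K}" for c :: 'a
  define B where "B = {P\<in>S. P \<subseteq> H}"
  have KHc: "K \<subseteq> Hc c" for c unfolding Hc_def using vec.span_superset by blast
  have Hchyp: "is_hyperplane (Hc c)" for c
  proof -
    have "b + c *s a \<notin> K"
    proof
      assume "b + c *s a \<in> K"
      hence "(b + c *s a) - c *s a \<in> H" using KH a Hs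
        by (meson subsetD vec.subspace_diff vec.subspace_scale)
      thus False using b by simp
    qed
    moreover have "vec.span K = K" using Ks by simp
    ultimately have "b + c *s a \<notin> vec.span K" by metis
    hence d: "vec.dim (insert (b + c *s a) K) = vec.dim K + 1" using vec.dim_insert[of "b + c *s a" K] by metis
    have "vec.dim (Hc c) = v - 2 + 1" unfolding Hc_def vec.dim_span using d Kd by simp
    thus ?thesis unfolding is_hyperplane_def kspace_def Hc_def v_def using v2
      by (simp add: v_def)
  qed
  have ptsK: "pts_in S K = k * q ^ (r - 1)" using assms(8) q_def by simp
  have Abig: "card (A c) + k * q ^ (r - 1) \<ge> q ^ r" for c
  proof -
    have "pts_in S (Hc c) mod q ^ r = card S mod q ^ r"
      using assms(4) Hchyp unfolding divisible_def q_def by blast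
    hence dv: "q ^ r dvd pts_in S (Hc c)" using assms(3) assms(1) unfolding q_def
      by (simp add: mod_eq_0_iff_dvd le_imp_power_dvd)
    have "pts_in S K \<le> pts_in S (Hc c)" unfolding pts_in_def
      by (rule card_mono) (use KHc in auto)
    moreover have "pts_in S K > 0" using ptsK assms(9) q1 by simp
    ultimately have "q ^ r \<le> pts_in S (Hc c)" using dv dvd_imp_le by fastforce
    moreover have "{P\<in>S. P \<subseteq> Hc c} = A c \<union> {P\<in>S. P \<subseteq> K}"
      unfolding A_def using KHc by auto
    hence "pts_in S (Hc c) = card (A c) + pts_in S K" unfolding pts_in_def
      by (subst card_Un_disjoint[symmetric]) (auto simp: A_def)
    ultimately show ?thesis using ptsK by simp
  qed
  have disjAA: "A c \<inter> A d = {}" if "c \<noteq> d" for c d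
  proof (rule ccontr)
    assume "A c \<inter> A d \<noteq> {}"
    then obtain P where P: "P \<in> A c" "P \<in> A d" by blast
    have "P \<subseteq> K"
    proof
      fix x assume "x \<in> P"
      hence x1: "x \<in> Hc c" and x2: "x \<in> Hc d" using P unfolding A_def by auto
      obtain t where t: "x - t *s (b + c *s a) \<in> K" using span_ins_mem[OF Ks] x1 Hc_def by blast
      obtain s where s: "x - s *s (b + d *s a) \<in> K" using span_ins_mem[OF Ks] x2 Hc_def by blast
      show "x \<in> K" using inter_pencil[OF Ks Hs KH a b that t s] .
    qed
    thus False using P unfolding A_def by auto
  qed
  have disjAB: "B \<inter> A c = {}" for c
  proof (rule ccontr)
    assume "B \<inter> A c \<noteq> {}"
    then obtain P where P: "P \<in> B" "P \<in> A c" by blast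
    have "P \<subseteq> K"
    proof
      fix x assume "x \<in> P"
      hence x1: "x \<in> Hc c" and x2: "x \<in> H" using P unfolding A_def B_def by auto
      obtain t where t: "x - t *s (b + c *s a) \<in> K" using span_ins_mem[OF Ks] x1 Hc_def by blast
      show "x \<in> K" using inter_pencil_H[OF Ks Hs KH a(1) b x2 t] .
    qed
    thus False using P unfolding A_def by auto
  qed
  have "card (\<Union>c. A c) = (\<Sum>c\<in>UNIV. card (A c))"
  proof (rule card_UN_disjoint)
    show "finite (UNIV :: 'a set)" by simp
    show "\<forall>i\<in>UNIV. finite (A i)" unfolding A_def using finS by simp
    show "\<forall>i\<in>UNIV. \<forall>j\<in>UNIV. i \<noteq> j \<longrightarrow> A i \<inter> A j = {}" using disjAA by blast
  qed
  moreover have "card (B \<union> (\<Union>c. A c)) = card B + card (\<Union>c. A c)"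
    by (rule card_Un_disjoint) (use disjAB in \<open>auto simp: A_def B_def intro: finite_subset[OF _ finS]\<close>)
  moreover have "card (B \<union> (\<Union>c. A c)) \<le> card S"
    by (rule card_mono[OF finS]) (auto simp: A_def B_def)
  ultimately have tot: "card B + (\<Sum>c\<in>UNIV. card (A c)) \<le> q ^ (r + 1)"
    using assms(3) q_def by simp
  have "(\<Sum>c\<in>(UNIV::'a set). q ^ r) \<le> (\<Sum>c\<in>UNIV. card (A c) + k * q ^ (r - 1))"
    by (rule sum_mono) (rule Abig)
  hence "q * q ^ r \<le> (\<Sum>c\<in>UNIV. card (A c)) + q * (k * q ^ (r - 1))"
    by (simp add: sum.distrib q_def)
  moreover have "q * (k * q ^ (r - 1)) = k * q ^ r" using assms(1)
    by (metis mult.left_commute power_eq_if not_one_le_zero le_zero_eq)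
  ultimately have "q ^ (r+1) \<le> (\<Sum>c\<in>UNIV. card (A c)) + k * q ^ r" by (metis power_Suc Suc_eq_plus1)
  hence "card B \<le> k * q ^ r" using tot by linarith
  thus "pts_in S H \<le> k * CARD('a) ^ r" unfolding pts_in_def B_def q_def .
qed

end
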